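(* For every integer $n\ge 1$ there is a self-constructing set of cardinality exactly $n$. Moreover, there is a self-constructing set which is creative (in particular, not computable).
   Context: $\omega$ denotes the set of natural numbers $\{0,1,2,\dots\}$. $\langle \psi_e : e\in\omega\rangle$ is a standard (acceptable, in the sense of Rogers) computable numbering of all partial computable functions from $\omega$ to $\omega$, and $W_e$ denotes the domain of $\psi_e$. A nonempty computably enumerable set $A\subseteq\omega$ is called self-constructing if $W_e=A$ for every $e\in A$. A computably enumerable set $C$ is creative if its complement is productive, i.e. there is a partial computable $p$ such that whenever $W_x\subseteq\omega\setminus C$, $p(x)$ is defined and $p(x)\in(\omega\setminus C)\setminus W_x$. *)

theory Defs
  imports Main
begin

datatype recf = Z | S | Proj nat | Cn recf "recf list" | Pr recf recf | Mn recf

inductive eval :: "recf \<Rightarrow> nat list \<Rightarrow> nat \<Rightarrow> bool" where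
  eval_Z: "eval Z xs 0"
| eval_S: "eval S (x # xs) (Suc x)"
| eval_Proj: "i < length xs \<Longrightarrow> eval (Proj i) xs (xs ! i)"
| eval_Cn: "list_all2 (\<lambda>g y. eval g xs y) gs ys \<Longrightarrow> eval f ys z \<Longrightarrow> eval (Cn f gs) xs z"
| eval_Pr0: "eval f xs y \<Longrightarrow> eval (Pr f g) (0 # xs) y"
| eval_PrS: "eval (Pr f g) (n # xs) y \<Longrightarrow> eval g (n # y # xs) z
             \<Longrightarrow> eval (Pr f g) (Suc n # xs) z"
| eval_Mn: "eval f (n # xs) 0 \<Longrightarrow> (\<forall>m<n. \<exists>y. eval f (m # xs) y \<and> y \<noteq> 0)
             \<Longrightarrow> eval (Mn f) xs n"

definition partial_computable :: "(nat \<Rightarrow> nat option) \<Rightarrow> bool" where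
  "partial_computable f \<longleftrightarrow> (\<exists>r. \<forall>x y. eval r [x] y \<longleftrightarrow> f x = Some y)"

definition partial_computable2 :: "(nat \<Rightarrow> nat \<Rightarrow> nat option) \<Rightarrow> bool" where
  "partial_computable2 g \<longleftrightarrow> (\<exists>r. \<forall>e x y. eval r [e, x] y \<longleftrightarrow> g e x = Some y)"

definition total_computable :: "(nat \<Rightarrow> nat) \<Rightarrow> bool" where
  "total_computable t \<longleftrightarrow> partial_computable (\<lambda>x. Some (t x))"

definition computable_numbering :: "(nat \<Rightarrow> nat \<Rightarrow> nat option) \<Rightarrow> bool" where
  "computable_numbering \<phi> \<longleftrightarrow>
     partial_computable2 \<phi> \<and> (\<forall>f. partial_computable f \<longrightarrow> (\<exists>e. \<phi> e = f))"

definition acceptable :: "(nat \<Rightarrow> nat \<Rightarrow> nat option) \<Rightarrow> bool" where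
  "acceptable \<psi> \<longleftrightarrow> computable_numbering \<psi> \<and>
     (\<forall>\<phi>. partial_computable2 \<phi> \<longrightarrow>
         (\<exists>t. total_computable t \<and> (\<forall>e. \<phi> e = \<psi> (t e))))"

definition W :: "(nat \<Rightarrow> nat \<Rightarrow> nat option) \<Rightarrow> nat \<Rightarrow> nat set" where
  "W \<psi> e = dom (\<psi> e)"

definition ce :: "nat set \<Rightarrow> bool" where
  "ce A \<longleftrightarrow> (\<exists>f. partial_computable f \<and> A = dom f)"

definition computable_set :: "nat set \<Rightarrow> bool" where
  "computable_set A \<longleftrightarrow> total_computable (\<lambda>x. if x \<in> A then 1 else 0)"

definition self_constructing :: "(nat \<Rightarrow> nat \<Rightarrow> nat option) \<Rightarrow> nat set \<Rightarrow> bool" where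
  "self_constructing \<psi> A \<longleftrightarrow> A \<noteq> {} \<and> ce A \<and> (\<forall>e\<in>A. W \<psi> e = A)"

definition productive :: "(nat \<Rightarrow> nat \<Rightarrow> nat option) \<Rightarrow> nat set \<Rightarrow> bool" where
  "productive \<psi> P \<longleftrightarrow> (\<exists>p. partial_computable p \<and>
      (\<forall>x. W \<psi> x \<subseteq> P \<longrightarrow> (\<exists>y. p x = Some y \<and> y \<in> P - W \<psi> x)))"

definition creative :: "(nat \<Rightarrow> nat \<Rightarrow> nat option) \<Rightarrow> nat set \<Rightarrow> bool" where
  "creative \<psi> C \<longleftrightarrow> ce C \<and> productive \<psi> (- C)"

end

theory Submission imports Defs begin

lemma eval_Z_iff[simp]: "eval Z xs y \<longleftrightarrow> y = 0"
  by (auto elim: eval.cases intro: eval.intros)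
lemma eval_S_iff[simp]: "eval S (x#xs) y \<longleftrightarrow> y = Suc x"
  by (auto elim: eval.cases intro: eval.intros)
lemma eval_Proj_iff[simp]: "eval (Proj i) xs y \<longleftrightarrow> i < length xs \<and> y = xs!i"
  by (auto elim: eval.cases intro: eval.intros)
lemma eval_Cn_iff: "eval (Cn f gs) xs z \<longleftrightarrow> (\<exists>ys. list_all2 (\<lambda>g y. eval g xs y) gs ys \<and> eval f ys z)"
  by (auto elim: eval.cases intro: eval.intros)
lemma eval_Pr0_iff[simp]: "eval (Pr f g) (0 # xs) y \<longleftrightarrow> eval f xs y"
  by (auto elim: eval.cases intro: eval.intros)
lemma eval_PrS_iff[simp]: "eval (Pr f g) (Suc n # xs) z \<longleftrightarrow> (\<exists>y. eval (Pr f g) (n#xs) y \<and> eval g (n#y#xs) z)"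
  by (auto elim: eval.cases intro: eval.intros)
lemma eval_Mn_iff: "eval (Mn f) xs n \<longleftrightarrow> eval f (n#xs) 0 \<and> (\<forall>m<n. \<exists>y. eval f (m#xs) y \<and> y\<noteq>0)"
  by (auto elim: eval.cases intro: eval.intros)

lemma eval_det: "eval r xs y \<Longrightarrow> eval r xs y' \<Longrightarrow> y = y'"
proof (induction r arbitrary: xs y y')
  case (Cn f gs)
  from Cn.prems obtain ys ys' where a: "list_all2 (\<lambda>g y. eval g xs y) gs ys" "eval f ys y"
    and b: "list_all2 (\<lambda>g y. eval g xs y) gs ys'" "eval f ys' y'" by (auto simp: eval_Cn_iff)
  have "ys = ys'" using a(1) b(1) Cn.IH(2)
  proof (induction gs arbitrary: ys ys')
    case Nil then show ?case by simp
  next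
    case (Cons g gs)
    from Cons.prems obtain z zs za zsa where e: "ys = z # zs" "ys' = za # zsa" "eval g xs z" "eval g xs za"
      "list_all2 (\<lambda>g y. eval g xs y) gs zs" "list_all2 (\<lambda>g y. eval g xs y) gs zsa"
      by (auto simp: list_all2_Cons1)
    have "z = za" using e Cons.prems(3) by auto
    moreover have "zs = zsa" using e(5,6) Cons.prems(3) by (intro Cons.IH) auto
    ultimately show ?case using e by simp
  qed
  with a b Cn.IH(1) show ?case by blast
next
  case (Pr f g)
  show ?case using Pr.prems
  proof (induction xs arbitrary: y y')
    case Nil then show ?case by (auto elim: eval.cases)
  next
    case (Cons n xs)
    then show ?case
    proof (induction n arbitrary: y y')
      case 0 then show ?case using Pr.IH(1) by simp
    next
      case (Suc n) then show ?case using Pr.IH(2) by (metis eval_PrS_iff)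
    qed
  qed
next
  case (Mn f)
  from Mn.prems show ?case unfolding eval_Mn_iff
    by (metis Mn.IH linorder_neqE_nat)
qed (auto elim: eval.cases)

lemma eval_Cn0[simp]: "eval (Cn f []) xs z \<longleftrightarrow> eval f [] z"
  by (auto simp: eval_Cn_iff)
lemma eval_Cn1[simp]: "eval (Cn f [g]) xs z \<longleftrightarrow> (\<exists>y. eval g xs y \<and> eval f [y] z)"
  apply (rule iffI)
   apply (auto simp: eval_Cn_iff list_all2_Cons1)[1]
  apply (elim exE conjE)
  apply (rule eval_Cn[where ys="[_]"]) by auto
lemma eval_Cn2[simp]: "eval (Cn f [g1,g2]) xs z \<longleftrightarrow> (\<exists>y1 y2. eval g1 xs y1 \<and> eval g2 xs y2 \<and> eval f [y1,y2] z)"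
  apply (rule iffI)
   apply (auto simp: eval_Cn_iff list_all2_Cons1)[1]
  apply (elim exE conjE)
  apply (rule eval_Cn[where ys="[_,_]"]) by auto
lemma eval_Cn3[simp]: "eval (Cn f [g1,g2,g3]) xs z \<longleftrightarrow> (\<exists>y1 y2 y3. eval g1 xs y1 \<and> eval g2 xs y2 \<and> eval g3 xs y3 \<and> eval f [y1,y2,y3] z)"
  apply (rule iffI)
   apply (auto simp: eval_Cn_iff list_all2_Cons1)[1]
  apply (elim exE conjE)
  apply (rule eval_Cn[where ys="[_,_,_]"]) by auto
lemma eval_Cn4[simp]: "eval (Cn f [g1,g2,g3,g4]) xs z \<longleftrightarrow> (\<exists>y1 y2 y3 y4. eval g1 xs y1 \<and> eval g2 xs y2 \<and> eval g3 xs y3 \<and> eval g4 xs y4 \<and> eval f [y1,y2,y3,y4] z)"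
  apply (rule iffI)
   apply (auto simp: eval_Cn_iff list_all2_Cons1)[1]
  apply (elim exE conjE)
  apply (rule eval_Cn[where ys="[_,_,_,_]"]) by auto

definition ADD where "ADD = Pr (Proj 0) (Cn S [Proj 1])"
lemma eval_ADD[simp]: "eval ADD [a,b] y \<longleftrightarrow> y = a + b"
  unfolding ADD_def by (induction a arbitrary: y) auto

definition PRED where "PRED = Pr Z (Proj 0)"
lemma eval_PRED[simp]: "eval PRED [n] y \<longleftrightarrow> y = n - 1"
  unfolding PRED_def by (induction n arbitrary: y) auto

definition MON where "MON = Pr (Proj 0) (Cn PRED [Proj 1])"
lemma eval_MON: "eval MON [b,a] y \<longleftrightarrow> y = a - b"
  unfolding MON_def by (induction b arbitrary: y) auto

definition SUB where "SUB = Cn MON [Proj 1, Proj 0]"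
lemma eval_SUB[simp]: "eval SUB [a,b] y \<longleftrightarrow> y = a - b"
  unfolding SUB_def by (auto simp: eval_MON)

fun cst where "cst 0 = Z" | "cst (Suc n) = Cn S [cst n]"
lemma eval_cst[simp]: "eval (cst n) xs y \<longleftrightarrow> y = n"
  by (induction n arbitrary: y) auto

definition DIST where "DIST g h = Cn ADD [Cn SUB [g,h], Cn SUB [h,g]]"
lemma eval_DIST[simp]: "eval (DIST g h) xs y \<longleftrightarrow> (\<exists>a b. eval g xs a \<and> eval h xs b \<and> y = (a - b) + (b - a))"
  unfolding DIST_def by auto (metis eval_det)

lemma acc_U: assumes "acceptable \<psi>" obtains rU where "\<And>e x y. eval rU [e,x] y \<longleftrightarrow> \<psi> e x = Some y"
  using assms unfolding acceptable_def computable_numbering_def partial_computable2_def by blast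

lemma acc_smn: assumes "acceptable \<psi>" and "\<And>e x y. eval r [e,x] y \<longleftrightarrow> \<phi> e x = Some y"
  shows "\<exists>t rt. (\<forall>x y. eval rt [x] y \<longleftrightarrow> y = t x) \<and> (\<forall>e. \<psi> (t e) = \<phi> e)"
proof -
  have "partial_computable2 \<phi>" unfolding partial_computable2_def using assms(2) by blast
  then obtain t where "total_computable t" "\<forall>e. \<phi> e = \<psi> (t e)"
    using assms(1) unfolding acceptable_def by blast
  then show ?thesis unfolding total_computable_def partial_computable_def by force
qed

lemma acc_idx: assumes "acceptable \<psi>" and "\<And>x y. eval r [x] y \<longleftrightarrow> f x = Some y"
  shows "\<exists>e. \<psi> e = f"
  using assms unfolding acceptable_def computable_numbering_def partial_computable_def by blast

lemma pc_psi: assumes "acceptable \<psi>" shows "partial_computable (\<psi> e)"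
proof -
  obtain rU where U: "\<And>e x y. eval rU [e,x] y \<longleftrightarrow> \<psi> e x = Some y" using acc_U[OF assms] by blast
  show ?thesis unfolding partial_computable_def
    by (rule exI[of _ "Cn rU [cst e, Proj 0]"]) (auto simp: U)
qed

lemma recthm: assumes acc: "acceptable \<psi>" and rf: "\<And>x y. eval rf [x] y \<longleftrightarrow> y = f x"
  shows "\<exists>n. \<psi> (f n) = \<psi> n"
proof -
  obtain rU where U: "\<And>e x y. eval rU [e,x] y \<longleftrightarrow> \<psi> e x = Some y" using acc_U[OF acc] by blast
  define \<phi> where "\<phi> = (\<lambda>u x. case \<psi> u u of Some v \<Rightarrow> \<psi> v x | None \<Rightarrow> None)"
  have r: "eval (Cn rU [Cn rU [Proj 0, Proj 0], Proj 1]) [e,x] y \<longleftrightarrow> \<phi> e x = Some y" for e x y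
    by (cases "\<psi> e e") (simp_all add: U \<phi>_def)
  obtain rt t where rt: "\<And>x y. eval rt [x] y \<longleftrightarrow> y = t x" and tt: "\<And>e. \<psi> (t e) = \<phi> e"
    using acc_smn[OF acc r] by blast
  have c: "eval (Cn rf [Cn rt [Proj 0]]) [x] y \<longleftrightarrow> (\<lambda>u. Some (f (t u))) x = Some y" for x y
    by (auto simp: rf rt)
  obtain v where v: "\<psi> v = (\<lambda>u. Some (f (t u)))" using acc_idx[OF acc c] by blast
  have "\<psi> (t v) = \<psi> (f (t v))" using tt[of v] v unfolding \<phi>_def by simp
  then show ?thesis by metis
qed

lemma Mn_const: assumes "\<And>n y. eval V (n#L) y \<longleftrightarrow> R y"
  shows "eval (Mn V) L k \<longleftrightarrow> k = 0 \<and> R 0"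
proof
  assume "eval (Mn V) L k"
  then have a: "eval V (k#L) 0" and b: "\<forall>m<k. \<exists>y. eval V (m#L) y \<and> y\<noteq>0" by (auto simp: eval_Mn_iff)
  from a have r0: "R 0" using assms by simp
  have "k = 0"
  proof (rule ccontr)
    assume "k \<noteq> 0"
    then obtain y where "eval V (0#L) y" "y \<noteq> 0" using b by auto
    moreover have "eval V (0#L) 0" using r0 assms by simp
    ultimately show False using eval_det by blast
  qed
  then show "k = 0 \<and> R 0" using r0 by simp
next
  assume "k = 0 \<and> R 0"
  then show "eval (Mn V) L k" using assms by (simp add: eval_Mn_iff)
qed

lemma Pr_cond: assumes "\<And>m p k. eval G (m#p#L) k \<longleftrightarrow> k = 0 \<and> P"
  shows "eval (Pr Z G) (d#L) y \<longleftrightarrow> y = 0 \<and> (d = 0 \<or> P)"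
  by (induction d arbitrary: y) (auto simp: assms)

definition Wr where "Wr rU rq = Cn ADD [Cn ADD [Cn SUB [cst 1, Proj 0], DIST (Cn rU [Proj 1, Proj 0]) (Proj 2)],
   Cn Z [Cn rq [Cn PRED [Proj 0]]]]"

definition Vr where "Vr rU rq = Cn (Wr rU rq) [Cn rU [Proj 4, Cn rU [Proj 3, Z]], Proj 3, Proj 4]"

definition RD where "RD rU rq = Cn (Pr Z (Mn (Vr rU rq))) [DIST (Proj 1) (Cn rU [Proj 0, Z]), Proj 0, Proj 1]"

definition chk :: "(nat \<Rightarrow> nat \<Rightarrow> nat option) \<Rightarrow> (nat \<Rightarrow> nat option) \<Rightarrow> nat \<Rightarrow> nat \<Rightarrow> bool" where
 "chk \<psi> q u x \<longleftrightarrow> (\<exists>c z. \<psi> u 0 = Some c \<and> \<psi> x c = Some z \<and> 1 \<le> z \<and> q (z-1) \<noteq> None \<and> \<psi> u z = Some x)"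

context
  fixes \<psi> :: "nat \<Rightarrow> nat \<Rightarrow> nat option" and rU rq q
  assumes U: "\<And>e x y. eval rU [e,x] y \<longleftrightarrow> \<psi> e x = Some y"
    and Q: "\<And>y v. eval rq [y] v \<longleftrightarrow> q y = Some v"
begin

lemma eval_Wr: "eval (Wr rU rq) [z,u,x] y \<longleftrightarrow>
   (\<exists>w v. \<psi> u z = Some w \<and> q (z-1) = Some v \<and> y = (1 - z) + ((w - x) + (x - w)))"
  unfolding Wr_def by (auto simp: U Q)

lemma eval_Vr: "eval (Vr rU rq) [n,m,p,u,x] y \<longleftrightarrow>
   (\<exists>c z w v. \<psi> u 0 = Some c \<and> \<psi> x c = Some z \<and> \<psi> u z = Some w \<and> q (z-1) = Some v \<and> y = (1 - z) + ((w - x) + (x - w)))"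
  unfolding Vr_def by (auto simp: U eval_Wr)


lemma eval_MnV: "eval (Mn (Vr rU rq)) [m,p,u,x] k \<longleftrightarrow> k = 0 \<and> chk \<psi> q u x"
proof -
  have "eval (Mn (Vr rU rq)) [m,p,u,x] k \<longleftrightarrow> k = 0 \<and> (\<exists>c z w v. \<psi> u 0 = Some c \<and> \<psi> x c = Some z \<and> \<psi> u z = Some w \<and> q (z-1) = Some v \<and> 0 = (1 - z) + ((w - x) + (x - w)))"
    by (rule Mn_const) (simp add: eval_Vr)
  also have "\<dots> \<longleftrightarrow> k = 0 \<and> chk \<psi> q u x" unfolding chk_def
    by (auto simp: not_less_eq_eq)
  finally show ?thesis .
qed

lemma eval_RD: "eval (RD rU rq) [u,x] y \<longleftrightarrow> y = 0 \<and> (\<exists>c. \<psi> u 0 = Some c \<and> (x = c \<or> chk \<psi> q u x))"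
proof -
  have pr: "eval (Pr Z (Mn (Vr rU rq))) [d,u,x] y \<longleftrightarrow> y = 0 \<and> (d = 0 \<or> chk \<psi> q u x)" for d y
    by (rule Pr_cond) (simp add: eval_MnV)
  show ?thesis unfolding RD_def by (auto simp: pr U)
qed

end


lemma construct:
  assumes acc: "acceptable \<psi>" and Q: "\<And>y v. eval rq [y] v \<longleftrightarrow> q y = Some v"
  shows "\<exists>a u0. (\<forall>j. \<psi> u0 j = Some (a j)) \<and> inj a \<and>
     (\<forall>j x. \<psi> (a j) x = (if x = a 0 \<or> (\<exists>z\<ge>1. q (z-1) \<noteq> None \<and> x = a z) then Some j else None))"
proof -
  obtain rU where U: "\<And>e x y. eval rU [e,x] y \<longleftrightarrow> \<psi> e x = Some y" using acc_U[OF acc] by blast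
  have rs0: "eval (Cn S [Cn rU [Proj 0, Proj 1]]) [v,x] y \<longleftrightarrow> map_option Suc (\<psi> v x) = Some y" for v x y
    by (auto simp: U)
  obtain s rs where rs: "\<forall>x y. eval rs [x] y \<longleftrightarrow> y = s x" and ss: "\<forall>v. \<psi> (s v) = (\<lambda>x. map_option Suc (\<psi> v x))"
    using acc_smn[OF acc rs0] by blast
  define DD where "DD = (\<lambda>u x. if (\<exists>c. \<psi> u 0 = Some c \<and> (x = c \<or> chk \<psi> q u x)) then Some (0::nat) else None)"
  have rd0: "eval (RD rU rq) [u,x] y \<longleftrightarrow> DD u x = Some y" for u x y
    unfolding DD_def by (simp add: eval_RD[OF U Q])
  obtain t rt where rt: "\<forall>x y. eval rt [x] y \<longleftrightarrow> y = t x" and tt: "\<forall>u. \<psi> (t u) = DD u"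
    using acc_smn[OF acc rd0] by blast
  define P where "P = Pr (Cn rt [Proj 0]) (Cn rs [Proj 1])"
  have evP: "eval P [j,u] y \<longleftrightarrow> y = (s^^j) (t u)" for j u y
    unfolding P_def by (induction j arbitrary: y) (auto simp: rt rs)
  have ri: "eval (Cn P [Proj 1, Proj 0]) [u,j] y \<longleftrightarrow> Some ((s^^j) (t u)) = Some y" for u j y
    by (auto simp: evP)
  obtain f rf where rf: "\<forall>x y. eval rf [x] y \<longleftrightarrow> y = f x" and ff: "\<forall>u. \<psi> (f u) = (\<lambda>j. Some ((s^^j) (t u)))"
    using acc_smn[OF acc ri] by blast
  obtain u0 where u0: "\<psi> (f u0) = \<psi> u0" using recthm[OF acc] rf by blast
  define a where "a = (\<lambda>j. (s^^j) (t u0))"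
  have psiu: "\<psi> u0 j = Some (a j)" for j using u0 ff a_def by metis
  have psia: "\<psi> (a j) x = map_option (\<lambda>v. v + j) (DD u0 x)" for j x
  proof (induction j)
    case 0 then show ?case by (simp add: a_def tt option.map_ident)
  next
    case (Suc j)
    have "\<psi> (a (Suc j)) x = map_option Suc (\<psi> (a j) x)" by (simp add: a_def ss)
    then show ?case using Suc by (simp add: option.map_comp comp_def)
  qed
  define Dm where "Dm x \<longleftrightarrow> (x = a 0 \<or> (\<exists>z. \<psi> x (a 0) = Some z \<and> 1 \<le> z \<and> q (z-1) \<noteq> None \<and> a z = x))" for x
  have DDu: "DD u0 x = (if Dm x then Some 0 else None)" for x
    unfolding DD_def Dm_def chk_def by (auto simp: psiu)
  have psia2: "\<psi> (a j) x = (if Dm x then Some j else None)" for j x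
    by (simp add: psia DDu)
  have D0: "Dm (a 0)" by (simp add: Dm_def)
  have injA: "inj a"
  proof (rule injI)
    fix i j assume "a i = a j"
    then have "\<psi> (a i) (a 0) = \<psi> (a j) (a 0)" by simp
    then show "i = j" using D0 by (simp add: psia2)
  qed
  have Dmc: "Dm x \<longleftrightarrow> (x = a 0 \<or> (\<exists>z\<ge>1. q (z-1) \<noteq> None \<and> x = a z))" for x
  proof
    assume "Dm x" then show "x = a 0 \<or> (\<exists>z\<ge>1. q (z-1) \<noteq> None \<and> x = a z)"
      unfolding Dm_def by auto
  next
    assume "x = a 0 \<or> (\<exists>z\<ge>1. q (z-1) \<noteq> None \<and> x = a z)"
    then show "Dm x"
    proof
      assume "\<exists>z\<ge>1. q (z-1) \<noteq> None \<and> x = a z"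
      then obtain z where z: "z \<ge> 1" "q (z-1) \<noteq> None" "x = a z" by blast
      have "\<psi> x (a 0) = Some z" using z(3) D0 by (simp add: psia2)
      then show "Dm x" unfolding Dm_def using z by auto
    qed (simp add: D0)
  qed
  show ?thesis
    apply (rule exI[of _ a], rule exI[of _ u0])
    using psiu injA psia2 Dmc by simp
qed


lemma sc_from_construct:
  assumes acc: "acceptable \<psi>" and ps: "\<forall>j x. \<psi> (a j) x = (if x \<in> A then Some j else None)" and A0: "a 0 \<in> A" and Ar: "A \<subseteq> range a"
  shows "self_constructing \<psi> A"
proof -
  have dA: "dom (\<psi> (a 0)) = A" using ps by (auto simp: dom_def)
  have "ce A" unfolding ce_def using pc_psi[OF acc, of "a 0"] dA by blast
  moreover have "\<forall>e\<in>A. W \<psi> e = A"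
  proof
    fix e assume "e \<in> A"
    then obtain j where "e = a j" using Ar by blast
    then show "W \<psi> e = A" using ps unfolding W_def by (auto simp: dom_def)
  qed
  ultimately show ?thesis unfolding self_constructing_def using A0 by blast
qed

lemma creative_noncomp: assumes acc: "acceptable \<psi>" and pr: "productive \<psi> (- A)"
  shows "\<not> computable_set A"
proof
  assume "computable_set A"
  then obtain rc where rc: "\<And>x y. eval rc [x] y \<longleftrightarrow> Some (if x \<in> A then 1 else 0) = Some y"
    unfolding computable_set_def total_computable_def partial_computable_def by blast
  have g: "eval (Mn (Cn rc [Proj 1])) [x] k \<longleftrightarrow> (\<lambda>x. if x \<in> A then None else Some 0) x = Some k" for x k
  proof -
    have "eval (Mn (Cn rc [Proj 1])) [x] k \<longleftrightarrow> k = 0 \<and> 0 = (if x \<in> A then 1 else (0::nat))"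
      by (rule Mn_const) (auto simp: rc)
    then show ?thesis by auto
  qed
  obtain e where e: "\<psi> e = (\<lambda>x. if x \<in> A then None else Some 0)" using acc_idx[OF acc g] by blast
  have "W \<psi> e = - A" unfolding W_def e by (auto simp: dom_def)
  then show False using pr unfolding productive_def by blast
qed


lemma part1: assumes acc: "acceptable \<psi>" and n: "n \<ge> (1::nat)"
  shows "\<exists>A. self_constructing \<psi> A \<and> finite A \<and> card A = n"
proof -
  define q where "q = (\<lambda>y. if y < n - 1 then Some (0::nat) else None)"
  have Q: "eval (Mn (Cn SUB [Cn S [Proj 1], cst (n-1)])) [y] v \<longleftrightarrow> q y = Some v" for y v
  proof -
    have "eval (Mn (Cn SUB [Cn S [Proj 1], cst (n-1)])) [y] v \<longleftrightarrow> v = 0 \<and> 0 = Suc y - (n - 1)"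
      by (rule Mn_const) auto
    then show ?thesis unfolding q_def by auto
  qed
  obtain a u0 where inj: "inj a" and ps: "\<forall>j x. \<psi> (a j) x = (if x = a 0 \<or> (\<exists>z\<ge>1. q (z-1) \<noteq> None \<and> x = a z) then Some j else None)"
    using construct[OF acc Q] by blast
  define A where "A = a ` {..<n}"
  have Aeq: "(x = a 0 \<or> (\<exists>z\<ge>1. q (z-1) \<noteq> None \<and> x = a z)) \<longleftrightarrow> x \<in> A" for x
  proof
    assume "x = a 0 \<or> (\<exists>z\<ge>1. q (z-1) \<noteq> None \<and> x = a z)"
    then show "x \<in> A" unfolding A_def q_def using n
      by (auto split: if_splits)
  next
    assume "x \<in> A"
    then obtain z where z: "z < n" "x = a z" unfolding A_def by blast
    show "x = a 0 \<or> (\<exists>z\<ge>1. q (z-1) \<noteq> None \<and> x = a z)"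
    proof (cases "z = 0")
      case True then show ?thesis using z by simp
    next
      case False then show ?thesis using z unfolding q_def by (intro disjI2 exI[of _ z]) auto
    qed
  qed
  have ps2: "\<forall>j x. \<psi> (a j) x = (if x \<in> A then Some j else None)" using ps Aeq by simp
  have "self_constructing \<psi> A"
    by (rule sc_from_construct[OF acc ps2]) (use n in \<open>auto simp: A_def\<close>)
  moreover have "finite A" "card A = n" unfolding A_def using inj
    by (auto simp: card_image inj_on_subset)
  ultimately show ?thesis by blast
qed

lemma part2: assumes acc: "acceptable \<psi>"
  shows "\<exists>A. self_constructing \<psi> A \<and> creative \<psi> A \<and> \<not> computable_set A"
proof -
  obtain rU where U: "\<And>e x y. eval rU [e,x] y \<longleftrightarrow> \<psi> e x = Some y" using acc_U[OF acc] by blast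
  define q where "q = (\<lambda>y. \<psi> y y)"
  have Q: "eval (Cn rU [Proj 0, Proj 0]) [y] v \<longleftrightarrow> q y = Some v" for y v
    by (auto simp: U q_def)
  obtain a u0 where psu: "\<forall>j. \<psi> u0 j = Some (a j)" and inj: "inj a" and ps: "\<forall>j x. \<psi> (a j) x = (if x = a 0 \<or> (\<exists>z\<ge>1. q (z-1) \<noteq> None \<and> x = a z) then Some j else None)"
    using construct[OF acc Q] by blast
  define A where "A = {x. x = a 0 \<or> (\<exists>z\<ge>1. q (z-1) \<noteq> None \<and> x = a z)}"
  have ps2: "\<forall>j x. \<psi> (a j) x = (if x \<in> A then Some j else None)" using ps unfolding A_def by simp
  have sc: "self_constructing \<psi> A"
    by (rule sc_from_construct[OF acc ps2]) (auto simp: A_def)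
  have ceA: "ce A" using sc unfolding self_constructing_def by blast
  have rh0: "eval (Cn rU [Proj 0, Cn rU [cst u0, Cn S [Proj 1]]]) [x,y] v \<longleftrightarrow> \<psi> x (a (Suc y)) = Some v" for x y v
    by (auto simp: U psu)
  obtain h rh where rh: "\<forall>x y. eval rh [x] y \<longleftrightarrow> y = h x" and hh: "\<forall>x. \<psi> (h x) = (\<lambda>y. \<psi> x (a (Suc y)))"
    using acc_smn[OF acc rh0] by blast
  define p where "p = (\<lambda>x. Some (a (Suc (h x))))"
  have "eval (Cn rU [cst u0, Cn S [Cn rh [Proj 0]]]) [x] y \<longleftrightarrow> p x = Some y" for x y
    by (auto simp: U psu rh p_def)
  then have pcp: "partial_computable p" unfolding partial_computable_def by blast
  have "\<exists>y. p x = Some y \<and> y \<in> - A - W \<psi> x" if sub: "W \<psi> x \<subseteq> - A" for x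
  proof -
    define k where "k = h x"
    have kK: "\<psi> k k = None"
    proof (rule ccontr)
      assume "\<psi> k k \<noteq> None"
      then have "\<psi> x (a (Suc k)) \<noteq> None" using hh k_def by simp
      then have "a (Suc k) \<in> W \<psi> x" unfolding W_def by auto
      moreover have "a (Suc k) \<in> A" unfolding A_def q_def using \<open>\<psi> k k \<noteq> None\<close> by (intro CollectI disjI2 exI[of _ "Suc k"]) auto
      ultimately show False using sub by blast
    qed
    have "a (Suc k) \<notin> W \<psi> x" using kK hh k_def unfolding W_def by (auto simp: dom_def)
    moreover have "a (Suc k) \<notin> A"
    proof
      assume "a (Suc k) \<in> A"
      then consider "a (Suc k) = a 0" | z where "z \<ge> 1" "q (z-1) \<noteq> None" "a (Suc k) = a z"
        unfolding A_def by blast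
      then show False
      proof cases
        case 1 then show False using inj by (auto dest: injD)
      next
        case 2 then have "z = Suc k" using inj by (auto dest: injD)
        then show False using 2 kK q_def by simp
      qed
    qed
    ultimately show ?thesis unfolding p_def k_def by auto
  qed
  then have "productive \<psi> (- A)" unfolding productive_def using pcp by blast
  then have "creative \<psi> A" "\<not> computable_set A" using ceA creative_noncomp[OF acc] unfolding creative_def by auto
  then show ?thesis using sc by blast
qed

theorem mainTheorem7:
  fixes \<psi> :: "nat \<Rightarrow> nat \<Rightarrow> nat option"
  assumes "acceptable \<psi>"
  shows "(\<forall>n::nat. n \<ge> 1 \<longrightarrow> (\<exists>A. self_constructing \<psi> A \<and> finite A \<and> card A = n))
       \<and> (\<exists>A. self_constructing \<psi> A \<and> creative \<psi> A \<and> \<not> computable_set A)"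
  using part1[OF assms] part2[OF assms] by blast

end
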